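(* Let $d\ge2$, $j\in[d-1]$ and $\bar{\mathbf p}$ a $j$-critical direction. For every $\varepsilon>0$ there exists a constant $\zeta>0$ such that if $\tau\ge\frac{\varepsilon}{\log n}$, then with high probability for every $(j+1)$-subset $B$ of $[n]$, the complex $\mathcal G_\tau+B$ contains at least $\zeta n$ many $j$-shells that contain $B$, where $\mathcal G_\tau=\mathcal G(n,\tau\bar{\mathbf p})$.
   Context: Whp = with probability tending to $1$ as $n\to\infty$. $\mathcal G(n,\mathbf p)$: random complex on $[n]$ in which for each $k\in[d]$ each $(k+1)$-subset is independently an edge with probability $\min\{p_k,1\}$; the complex consists of all singletons and all nonempty subsets of edges. For a complex $\mathcal G$ and nonempty $B\subseteq[n]$, $\mathcal G+B=\mathcal G\cup\{A\mid\emptyset\ne A\subseteq B\}$. A $(j+2)$-set is a $j$-shell in $\mathcal G$ if all its $(j+1)$-subsets are members of $\mathcal G$. $j$-critical direction: $\bar{\mathbf p}$ is $j$-admissible if for each $1\le k\le d$ there are real constants $\bar\alpha_k,\bar\gamma_k$ and a function $\bar\beta_k(n)$ with $\bar p_k=\frac{\bar\alpha_k\log n+\bar\beta_k}{n^{k-j+\bar\gamma_k}}(k-j)!$ and (A1) at least one of $\bar\alpha_k,\bar\gamma_k$ zero, neither negative; (A2) if $\bar\alpha_k=0$ then $\bar\beta_k\equiv0$ or $\bar\beta_k>0$ with $\bar\beta_k=o(n^\varepsilon)$, $\bar\beta_k=\omega(n^{-\varepsilon})$ for every constant $\varepsilon>0$; (A3) if $\bar\gamma_k=0$ then $|\bar\beta_k|=o(\log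 n)$; (A4) some $k\in\{j+1,\dots,d\}$ has $\bar\alpha_k>0$. For $j\le k\le d$, $\bar p_k\ne0$: $\bar\lambda_k=j+1-\bar\gamma_k-(k-j+1)\sum_{i=j+1}^d\bar\alpha_i$; $\bar\mu_k=-(k-j+1)\sum_{i=j+1}^d\bar\beta_i/n^{\bar\gamma_i}$ plus $0$ if $\bar p_k>1$, $\log\log n$ if $\bar p_k\le1,\bar\alpha_k\ne0$, $\log\bar\beta_k$ if $\bar p_k\le1,\bar\alpha_k=0$; $\bar\nu_k=-\log((j+1)!)$ if $k=j$, $-\log(j!)-\log(k-j+1)+\log\bar\alpha_k$ if $k\ne j,\bar\alpha_k\ne0$, $-\log(j!)-\log(k-j+1)$ otherwise. $j$-critical: $j$-admissible with $\bar\lambda_k\log n+\bar\mu_k+\bar\nu_k\le0$ for all such $k$ and equality for some $k$. *)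

theory Defs
  imports "HOL-Probability.Probability" "HOL-Library.Landau_Symbols"
begin

text \<open>A direction is a family p k n (k = dimension index, n = number of vertices).
  Representation via constants alpha k, gamma k and functions beta k of n.\<close>

definition admissible_repr ::
  "nat \<Rightarrow> nat \<Rightarrow> (nat \<Rightarrow> nat \<Rightarrow> real) \<Rightarrow> (nat \<Rightarrow> real) \<Rightarrow> (nat \<Rightarrow> nat \<Rightarrow> real)
    \<Rightarrow> (nat \<Rightarrow> real) \<Rightarrow> bool" where
  "admissible_repr d j p \<alpha> \<beta> \<gamma> \<longleftrightarrow>
     (\<forall>k\<in>{1..d}.
        (\<forall>n. p k n = (\<alpha> k * ln (real n) + \<beta> k n) / (real n powr (real k - real j + \<gamma> k))
                      * fact (k - j))
      \<and> \<alpha> k \<ge> 0 \<and> \<gamma> k \<ge> 0 \<and> (\<alpha> k = 0 \<or> \<gamma> k = 0)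
      \<and> (\<alpha> k = 0 \<longrightarrow>
           ((\<forall>n. \<beta> k n = 0) \<or>
            ((\<forall>n. \<beta> k n > 0) \<and>
             (\<forall>\<epsilon>>0. \<beta> k \<in> o(\<lambda>n. real n powr \<epsilon>) \<and> \<beta> k \<in> \<omega>(\<lambda>n. real n powr (-\<epsilon>))))))
      \<and> (\<gamma> k = 0 \<longrightarrow> (\<lambda>n. \<bar>\<beta> k n\<bar>) \<in> o(\<lambda>n. ln (real n))))
   \<and> (\<exists>k\<in>{j+1..d}. \<alpha> k > 0)"

definition j_admissible :: "nat \<Rightarrow> nat \<Rightarrow> (nat \<Rightarrow> nat \<Rightarrow> real) \<Rightarrow> bool" where
  "j_admissible d j p \<longleftrightarrow> (\<exists>\<alpha> \<beta> \<gamma>. admissible_repr d j p \<alpha> \<beta> \<gamma>)"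

definition crit_lambda :: "nat \<Rightarrow> nat \<Rightarrow> (nat \<Rightarrow> real) \<Rightarrow> (nat \<Rightarrow> real) \<Rightarrow> nat \<Rightarrow> real" where
  "crit_lambda d j \<alpha> \<gamma> k = real j + 1 - \<gamma> k - (real k - real j + 1) * (\<Sum>i=j+1..d. \<alpha> i)"

definition crit_mu ::
  "nat \<Rightarrow> nat \<Rightarrow> (nat \<Rightarrow> nat \<Rightarrow> real) \<Rightarrow> (nat \<Rightarrow> real) \<Rightarrow> (nat \<Rightarrow> nat \<Rightarrow> real)
    \<Rightarrow> (nat \<Rightarrow> real) \<Rightarrow> nat \<Rightarrow> nat \<Rightarrow> real" where
  "crit_mu d j p \<alpha> \<beta> \<gamma> k n =
     - (real k - real j + 1) * (\<Sum>i=j+1..d. \<beta> i n / real n powr \<gamma> i)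
     + (if p k n > 1 then 0
        else if \<alpha> k \<noteq> 0 then ln (ln (real n))
        else ln (\<beta> k n))"

definition crit_nu :: "nat \<Rightarrow> (nat \<Rightarrow> real) \<Rightarrow> nat \<Rightarrow> real" where
  "crit_nu j \<alpha> k =
     (if k = j then - ln (fact (j + 1))
      else if \<alpha> k \<noteq> 0 then - ln (fact j) - ln (real k - real j + 1) + ln (\<alpha> k)
      else - ln (fact j) - ln (real k - real j + 1))"

definition j_critical :: "nat \<Rightarrow> nat \<Rightarrow> (nat \<Rightarrow> nat \<Rightarrow> real) \<Rightarrow> bool" where
  "j_critical d j p \<longleftrightarrow>
     (\<exists>\<alpha> \<beta> \<gamma>. admissible_repr d j p \<alpha> \<beta> \<gamma>
       \<and> (\<forall>k\<in>{j..d}. p k \<noteq> (\<lambda>_. 0) \<longrightarrow>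
            (\<forall>\<^sub>F n in sequentially.
               crit_lambda d j \<alpha> \<gamma> k * ln (real n) + crit_mu d j p \<alpha> \<beta> \<gamma> k n + crit_nu j \<alpha> k \<le> 0))
       \<and> (\<exists>k\<in>{j..d}. p k \<noteq> (\<lambda>_. 0) \<and>
            (\<forall>\<^sub>F n in sequentially.
               crit_lambda d j \<alpha> \<gamma> k * ln (real n) + crit_mu d j p \<alpha> \<beta> \<gamma> k n + crit_nu j \<alpha> k = 0)))"

text \<open>Random complex G(n,p) on [n] = {1..n}; q k is the probability parameter p_k (at this n).\<close>

definition edge_cands :: "nat \<Rightarrow> nat \<Rightarrow> nat set set" where
  "edge_cands n d = {A. A \<subseteq> {1..n} \<and> 2 \<le> card A \<and> card A \<le> d + 1}"

definition random_edges :: "nat \<Rightarrow> nat \<Rightarrow> (nat \<Rightarrow> real) \<Rightarrow> (nat set \<Rightarrow> bool) pmf" where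
  "random_edges n d q =
     Pi_pmf (edge_cands n d) False (\<lambda>A. bernoulli_pmf (min (q (card A - 1)) 1))"

definition complex_of :: "nat \<Rightarrow> (nat set \<Rightarrow> bool) \<Rightarrow> nat set set" where
  "complex_of n E = {{v} | v. v \<in> {1..n}} \<union> {A. A \<noteq> {} \<and> (\<exists>e. E e \<and> A \<subseteq> e)}"

definition random_complex :: "nat \<Rightarrow> nat \<Rightarrow> (nat \<Rightarrow> real) \<Rightarrow> nat set set pmf" where
  "random_complex n d q = map_pmf (complex_of n) (random_edges n d q)"

definition add_set :: "nat set set \<Rightarrow> nat set \<Rightarrow> nat set set" where
  "add_set G B = G \<union> {A. A \<noteq> {} \<and> A \<subseteq> B}"

definition is_shell :: "nat set set \<Rightarrow> nat \<Rightarrow> nat set \<Rightarrow> bool" where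
  "is_shell G j S \<longleftrightarrow> finite S \<and> card S = j + 2 \<and> (\<forall>T. T \<subseteq> S \<and> card T = j + 1 \<longrightarrow> T \<in> G)"

end

theory Submission
  imports Defs
begin

lemma prob_neg: "measure_pmf.prob M {x. \<not> P x} = 1 - measure_pmf.prob M {x. P x}"
proof -
  have "{x. \<not> P x} = space (measure_pmf M) - {x. P x}" by auto
  moreover have "measure_pmf.prob M (space (measure_pmf M) - {x. P x}) = 1 - measure_pmf.prob M {x. P x}"
    by (rule measure_pmf.prob_compl) simp
  ultimately show ?thesis by simp
qed

lemma prob_Pi_pmf_local:
  fixes p :: "'a \<Rightarrow> 'b pmf"
  assumes "finite A" "A' \<subseteq> A" "F \<subseteq> A'"
    and loc: "\<And>f g. (\<forall>x\<in>F. f x = g x) \<Longrightarrow> P f = P g"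
  shows "measure_pmf.prob (Pi_pmf A dflt p) {f. P f} = measure_pmf.prob (Pi_pmf A' dflt p) {f. P f}"
proof -
  have "measure_pmf.prob (Pi_pmf A' dflt p) {f. P f} =
     measure_pmf.prob (map_pmf (\<lambda>f x. if x \<in> A' then f x else dflt) (Pi_pmf A dflt p)) {f. P f}"
    using assms(1,2) by (subst Pi_pmf_subset[of A A']) auto
  also have "\<dots> = measure_pmf.prob (Pi_pmf A dflt p) {f. P (\<lambda>x. if x \<in> A' then f x else dflt)}"
    by simp
  also have "{f. P (\<lambda>x. if x \<in> A' then f x else dflt)} = {f. P f}"
    using loc assms(3) by (smt (verit, ccfv_SIG) Collect_cong subsetD)
  finally show ?thesis by simp
qed

lemma prob_pair_pmf_times:
  "measure_pmf.prob (pair_pmf M N) (A \<times> B) = measure_pmf.prob M A * measure_pmf.prob N B"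
proof -
  have "measure_pmf.prob (pair_pmf M N) (A \<times> B) = measure_pmf.prob (pair_pmf M N) ((A \<inter> set_pmf M) \<times> (B \<inter> set_pmf N))"
    by (subst (1 2) measure_Int_set_pmf[symmetric]) (auto intro!: arg_cong[where f="measure_pmf.prob _"])
  also have "\<dots> = measure_pmf.prob M (A \<inter> set_pmf M) * measure_pmf.prob N (B \<inter> set_pmf N)"
    by (rule measure_pmf_prob_product) auto
  also have "\<dots> = measure_pmf.prob M A * measure_pmf.prob N B"
    by (simp add: measure_Int_set_pmf)
  finally show ?thesis .
qed

lemma prob_Pi_pmf_blocks:
  fixes F :: "'i \<Rightarrow> 'a set" and P :: "'i \<Rightarrow> ('a \<Rightarrow> 'b) \<Rightarrow> bool"
  assumes "finite I" "finite A" "\<And>i. i \<in> I \<Longrightarrow> F i \<subseteq> A" "disjoint_family_on F I"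
    "\<And>i f g. i \<in> I \<Longrightarrow> (\<forall>x\<in>F i. f x = g x) \<Longrightarrow> P i f = P i g"
  shows "measure_pmf.prob (Pi_pmf A dflt p) {f. \<forall>i\<in>I. P i f}
       = (\<Prod>i\<in>I. measure_pmf.prob (Pi_pmf A dflt p) {f. P i f})"
  using assms
proof (induction I arbitrary: A rule: finite_induct)
  case empty
  then show ?case by simp
next
  case (insert j I)
  define A1 where "A1 = F j"
  define A2 where "A2 = A - F j"
  have fin: "finite A1" "finite A2" using insert.prems by (auto simp: A1_def A2_def intro: finite_subset)
  have AU: "A = A1 \<union> A2" "A1 \<inter> A2 = {}" using insert.prems(2) by (auto simp: A1_def A2_def)
  have sub2: "F i \<subseteq> A2" if "i \<in> I" for i
    using insert.prems(2,3) insert.hyps that unfolding disjoint_family_on_def A2_def by auto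
  let ?h = "\<lambda>(f,g) x. if x \<in> A1 then f x else g x"
  have "measure_pmf.prob (Pi_pmf A dflt p) {f. \<forall>i\<in>insert j I. P i f}
      = measure_pmf.prob (map_pmf ?h (pair_pmf (Pi_pmf A1 dflt p) (Pi_pmf A2 dflt p))) {f. \<forall>i\<in>insert j I. P i f}"
    using AU fin by (simp add: Pi_pmf_union)
  also have "\<dots> = measure_pmf.prob (pair_pmf (Pi_pmf A1 dflt p) (Pi_pmf A2 dflt p))
                   ({f. P j f} \<times> {g. \<forall>i\<in>I. P i g})"
  proof -
    have "?h -` {f. \<forall>i\<in>insert j I. P i f} = {f. P j f} \<times> {g. \<forall>i\<in>I. P i g}"
    proof -
      have e1: "P j (?h (a,b)) = P j a" for a b by (rule insert.prems(4)) (auto simp: A1_def)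
      have e2: "P i (?h (a,b)) = P i b" if "i \<in> I" for i a b
        using sub2[OF that] AU that by (intro insert.prems(4)) auto
      show ?thesis using e1 e2 by auto
    qed
    then show ?thesis by simp
  qed
  also have "\<dots> = measure_pmf.prob (Pi_pmf A1 dflt p) {f. P j f} * measure_pmf.prob (Pi_pmf A2 dflt p) {g. \<forall>i\<in>I. P i g}"
    by (rule prob_pair_pmf_times)
  also have "measure_pmf.prob (Pi_pmf A2 dflt p) {g. \<forall>i\<in>I. P i g} = (\<Prod>i\<in>I. measure_pmf.prob (Pi_pmf A2 dflt p) {f. P i f})"
    using insert.prems fin sub2 by (intro insert.IH) (auto simp: disjoint_family_on_def)
  also have "\<dots> = (\<Prod>i\<in>I. measure_pmf.prob (Pi_pmf A dflt p) {f. P i f})"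
  proof (intro prod.cong refl)
    fix i assume i: "i \<in> I"
    show "measure_pmf.prob (Pi_pmf A2 dflt p) {f. P i f} = measure_pmf.prob (Pi_pmf A dflt p) {f. P i f}"
      by (rule prob_Pi_pmf_local[symmetric, of A A2 "F i"])
         (use insert.prems AU sub2[OF i] i in \<open>auto intro: insert.prems(4)\<close>)
  qed
  also have "measure_pmf.prob (Pi_pmf A1 dflt p) {f. P j f} = measure_pmf.prob (Pi_pmf A dflt p) {f. P j f}"
    by (rule prob_Pi_pmf_local[symmetric, of A A1 "F j"])
       (use insert.prems AU in \<open>auto intro: insert.prems(4) simp: A1_def\<close>)
  finally show ?case using insert.hyps by simp
qed

lemma map_Pi_pmf_local_bernoulli:
  fixes F :: "'i \<Rightarrow> 'a set" and Y :: "'i \<Rightarrow> ('a \<Rightarrow> 'b) \<Rightarrow> bool"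
  assumes "finite I" "finite A" "\<And>i. i \<in> I \<Longrightarrow> F i \<subseteq> A" "disjoint_family_on F I"
    "\<And>i f g. i \<in> I \<Longrightarrow> (\<forall>x\<in>F i. f x = g x) \<Longrightarrow> Y i f = Y i g"
  shows "map_pmf (\<lambda>f i. i \<in> I \<and> Y i f) (Pi_pmf A dflt p)
       = Pi_pmf I False (\<lambda>i. bernoulli_pmf (measure_pmf.prob (Pi_pmf A dflt p) {f. Y i f}))"
proof (rule pmf_eqI)
  fix h :: "'i \<Rightarrow> bool"
  let ?M = "Pi_pmf A dflt p"
  show "pmf (map_pmf (\<lambda>f i. i \<in> I \<and> Y i f) ?M) h =
        pmf (Pi_pmf I False (\<lambda>i. bernoulli_pmf (measure_pmf.prob ?M {f. Y i f}))) h"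
  proof (cases "\<forall>x. x \<notin> I \<longrightarrow> h x = False")
    case False
    then obtain x where x: "x \<notin> I" "h x" by auto
    have "(\<lambda>f i. i \<in> I \<and> Y i f) -` {h} = {}"
      using x by auto
    then have "pmf (map_pmf (\<lambda>f i. i \<in> I \<and> Y i f) ?M) h = 0"
      by (simp add: pmf_map)
    moreover have "pmf (Pi_pmf I False (\<lambda>i. bernoulli_pmf (measure_pmf.prob ?M {f. Y i f}))) h = 0"
      using False assms(1) by (subst pmf_Pi) auto
    ultimately show ?thesis by simp
  next
    case True
    have "(\<lambda>f i. i \<in> I \<and> Y i f) -` {h} = {f. \<forall>i\<in>I. Y i f = h i}"
      using True by (auto simp: fun_eq_iff)
    then have "pmf (map_pmf (\<lambda>f i. i \<in> I \<and> Y i f) ?M) h = measure_pmf.prob ?M {f. \<forall>i\<in>I. Y i f = h i}"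
      by (simp add: pmf_map)
    also have "\<dots> = (\<Prod>i\<in>I. measure_pmf.prob ?M {f. Y i f = h i})"
      by (rule prob_Pi_pmf_blocks[where F=F]) (use assms in \<open>auto; metis\<close>)+
    also have "\<dots> = (\<Prod>i\<in>I. pmf (bernoulli_pmf (measure_pmf.prob ?M {f. Y i f})) (h i))"
    proof (intro prod.cong refl)
      fix i assume "i \<in> I"
      show "measure_pmf.prob ?M {f. Y i f = h i} = pmf (bernoulli_pmf (measure_pmf.prob ?M {f. Y i f})) (h i)"
      proof (cases "h i")
        case True
        then show ?thesis by simp
      next
        case False
        have "measure_pmf.prob ?M {f. \<not> Y i f} = 1 - measure_pmf.prob ?M {f. Y i f}"
          by (rule prob_neg)
        then show ?thesis using False by simp
      qed
    qed
    also have "\<dots> = pmf (Pi_pmf I False (\<lambda>i. bernoulli_pmf (measure_pmf.prob ?M {f. Y i f}))) h"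
      using True assms(1) by (subst pmf_Pi) auto
    finally show ?thesis .
  qed
qed


lemma bernoulli_Pi_lower_tail:
  fixes X :: "'a set" and r :: "'a \<Rightarrow> real"
  assumes fin: "finite X" and ne: "X \<noteq> {}" and r: "\<And>v. v \<in> X \<Longrightarrow> r v \<in> {0..1}" and \<delta>: "\<delta> \<ge> 0"
  shows "measure_pmf.prob (Pi_pmf X False (\<lambda>v. bernoulli_pmf (r v)))
           {f. real (card {v\<in>X. f v}) \<le> (\<Sum>v\<in>X. r v) - \<delta>} \<le> exp (-2 * \<delta>\<^sup>2 / real (card X))"
proof -
  define P where "P = Pi_pmf X False (\<lambda>v. bernoulli_pmf (r v))"
  have exp_eq: "measure_pmf.expectation P (\<lambda>f. if f i then 1 else 0 :: real) = r i" if "i \<in> X" for i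
  proof -
    have "measure_pmf.expectation P (\<lambda>f. if f i then 1 else 0 :: real) =
          measure_pmf.expectation (map_pmf (\<lambda>f. f i) P) (\<lambda>b. if b then 1 else 0 :: real)"
      by simp
    also have "map_pmf (\<lambda>f. f i) P = bernoulli_pmf (r i)"
      unfolding P_def using fin that by (subst Pi_pmf_component) auto
    finally show ?thesis using r[OF that] by simp
  qed
  interpret H: Hoeffding_ineq "measure_pmf P" X "\<lambda>i f. if f i then 1 else 0" "\<lambda>_. 0" "\<lambda>_. 1" "\<Sum>v\<in>X. r v"
  proof unfold_locales
    show "prob_space.indep_vars (measure_pmf P) (\<lambda>_. borel) (\<lambda>i f. if f i then 1 else 0 :: real) X"
      unfolding P_def
      by (intro prob_space.indep_vars_compose2[OF _ indep_vars_Pi_pmf])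
         (auto simp: measure_pmf.prob_space_axioms fin)
    show "(\<Sum>v\<in>X. r v) \<equiv> (\<Sum>i\<in>X. measure_pmf.expectation P (\<lambda>f. if f i then 1 else 0))"
      using exp_eq by simp
  qed (auto simp: fin)
  have "measure_pmf.prob P {f\<in>space (measure_pmf P). (\<Sum>i\<in>X. if f i then 1 else 0) \<le> (\<Sum>v\<in>X. r v) - \<delta>}
      \<le> exp (-2 * \<delta>\<^sup>2 / (\<Sum>i\<in>X. (1 - 0)\<^sup>2))"
    by (rule H.Hoeffding_ineq_le[OF \<delta>]) (use fin ne in \<open>auto simp: card_gt_0_iff\<close>)
  moreover have "(\<Sum>i\<in>X. if f i then 1 else 0 :: real) = real (card {v\<in>X. f v})" for f
  proof -
    have "(\<Sum>i\<in>X. if f i then 1 else (0::real)) = (\<Sum>i\<in>{i\<in>X. f i}. 1)"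
      using fin by (intro sum.mono_neutral_cong_right) auto
    thus ?thesis by simp
  qed
  ultimately show ?thesis unfolding P_def by simp
qed


definition Xs :: "nat \<Rightarrow> nat set \<Rightarrow> nat set" where
  "Xs n B = {1..n div 2} - B"
definition Ys :: "nat \<Rightarrow> nat set \<Rightarrow> nat set" where
  "Ys n B = {n div 2 + 1..n} - B"
definition Ws :: "nat \<Rightarrow> nat set \<Rightarrow> nat \<Rightarrow> nat set set" where
  "Ws n B m = {W. W \<subseteq> Ys n B \<and> card W = m}"
definition edg :: "nat set \<Rightarrow> nat \<Rightarrow> nat \<Rightarrow> nat set \<Rightarrow> nat set" where
  "edg B b v W = (B - {b}) \<union> insert v W"

lemma finite_Xs [simp]: "finite (Xs n B)" and finite_Ys [simp]: "finite (Ys n B)"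
  by (auto simp: Xs_def Ys_def)

lemma finite_Ws [simp]: "finite (Ws n B m)"
proof -
  have "Ws n B m \<subseteq> Pow (Ys n B)" by (auto simp: Ws_def)
  then show ?thesis by (rule finite_subset) simp
qed

lemma XY_disj: "Xs n B \<inter> Ys n B = {}"
  by (auto simp: Xs_def Ys_def)

lemma card_Xs: "card B = k \<Longrightarrow> finite B \<Longrightarrow> real (card (Xs n B)) \<ge> real (n div 2) - real k"
proof -
  assume "card B = k" "finite B"
  have "card ({1..n div 2} - B) \<ge> card {1..n div 2} - card B"
    by (rule diff_card_le_card_Diff) (use \<open>finite B\<close> in simp)
  then show ?thesis using \<open>card B = k\<close> by (simp add: Xs_def)
qed

lemma card_Ys: "card B = k \<Longrightarrow> finite B \<Longrightarrow> real (card (Ys n B)) \<ge> real n - real (n div 2) - real k"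
proof -
  assume "card B = k" "finite B"
  have "card ({n div 2 + 1..n} - B) \<ge> card {n div 2 + 1..n} - card B"
    by (rule diff_card_le_card_Diff) (use \<open>finite B\<close> in simp)
  then show ?thesis using \<open>card B = k\<close> by (simp add: Ys_def)
qed

lemma card_Ws: "card (Ws n B m) = card (Ys n B) choose m"
  unfolding Ws_def by (simp add: n_subsets)

context
  fixes n d j m :: nat and B :: "nat set" and b v :: nat and W :: "nat set"
  assumes B: "B \<subseteq> {1..n}" "card B = j + 1" and b: "b \<in> B" and v: "v \<in> Xs n B"
    and W: "W \<in> Ws n B m"
begin

lemma finB: "finite B" using B by (auto intro: finite_subset)

lemma edg_Int_B: "edg B b v W \<inter> B = B - {b}"
  using v W by (auto simp: edg_def Xs_def Ws_def Ys_def)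

lemma edg_Int_Xs: "edg B b v W \<inter> Xs n B = {v}"
  using v W by (auto simp: edg_def Xs_def Ws_def Ys_def)

lemma edg_Int_Ys: "edg B b v W \<inter> Ys n B = W"
  using v W by (auto simp: edg_def Xs_def Ws_def Ys_def)

lemma card_edg: "card (edg B b v W) = j + m + 1"
proof -
  have fW: "finite W" using W by (auto simp: Ws_def intro: finite_subset[OF _ finite_Ys])
  have "card (B - {b}) = j" using B b finB by simp
  moreover have "v \<notin> W" "v \<notin> B" using v W by (auto simp: Ws_def Xs_def Ys_def)
  moreover have "(B - {b}) \<inter> insert v W = {}" using v W by (auto simp: Ws_def Xs_def Ys_def)
  moreover have "card W = m" using W by (simp add: Ws_def)
  ultimately show ?thesis unfolding edg_def using finB fW
    by (subst card_Un_disjoint) auto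
qed

lemma edg_cand: "1 \<le> j + m \<Longrightarrow> j + m \<le> d \<Longrightarrow> edg B b v W \<in> edge_cands n d"
proof -
  assume "j + m \<le> d" "1 \<le> j + m"
  have "edg B b v W \<subseteq> {1..n}" using B v W by (auto simp: edg_def Xs_def Ws_def Ys_def)
  then show ?thesis using card_edg \<open>j + m \<le> d\<close> \<open>1 \<le> j + m\<close> by (auto simp: edge_cands_def)
qed

end


definition Yev :: "nat \<Rightarrow> nat set \<Rightarrow> nat \<Rightarrow> nat \<Rightarrow> (nat set \<Rightarrow> bool) \<Rightarrow> bool" where
  "Yev n B m v E = (\<forall>b\<in>B. \<exists>W\<in>Ws n B m. E (edg B b v W))"

lemma finite_edge_cands [simp]: "finite (edge_cands n d)"
proof -
  have "edge_cands n d \<subseteq> Pow {1..n}" by (auto simp: edge_cands_def)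
  then show ?thesis by (rule finite_subset) simp
qed

context
  fixes n d j m :: nat and B :: "nat set" and q :: "nat \<Rightarrow> real" and qq :: real
  assumes B: "B \<subseteq> {1..n}" "card B = j + 1" and jm: "1 \<le> j + m" "j + m \<le> d"
    and qq: "qq = min (q (j + m)) 1" "0 \<le> qq"
begin

lemma prob_single_edge:
  assumes "e \<in> edge_cands n d" "card e = j + m + 1"
  shows "measure_pmf.prob (random_edges n d q) {E. E e} = qq"
proof -
  have "measure_pmf.prob (random_edges n d q) {E. E e} =
        measure_pmf.prob (map_pmf (\<lambda>E. E e) (random_edges n d q)) {True}"
    by (simp add: vimage_def)
  also have "map_pmf (\<lambda>E. E e) (random_edges n d q) = bernoulli_pmf qq"
    unfolding random_edges_def using assms qq by (subst Pi_pmf_component) auto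
  finally show ?thesis using qq by (simp add: measure_pmf_single)
qed

lemma prob_Z:
  assumes b: "b \<in> B" and v: "v \<in> Xs n B"
  shows "measure_pmf.prob (random_edges n d q) {E. \<exists>W\<in>Ws n B m. E (edg B b v W)}
         = 1 - (1 - qq) ^ card (Ws n B m)"
proof -
  let ?M = "random_edges n d q"
  have "measure_pmf.prob ?M {E. \<forall>W\<in>Ws n B m. \<not> E (edg B b v W)}
      = (\<Prod>W\<in>Ws n B m. measure_pmf.prob ?M {E. \<not> E (edg B b v W)})"
    unfolding random_edges_def
  proof (rule prob_Pi_pmf_blocks[where F="\<lambda>W. {edg B b v W}" and P="\<lambda>W E. \<not> E (edg B b v W)"])
    have inj: "W = W'" if "W \<in> Ws n B m" "W' \<in> Ws n B m" "edg B b v W = edg B b v W'" for W W'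
      using edg_Int_Ys[OF B b v that(1)] edg_Int_Ys[OF B b v that(2)] that(3) by argo
    show "disjoint_family_on (\<lambda>W. {edg B b v W}) (Ws n B m)"
    proof (unfold disjoint_family_on_def, intro ballI impI)
      fix W W' assume "W \<in> Ws n B m" "W' \<in> Ws n B m" "W \<noteq> W'"
      then have "edg B b v W \<noteq> edg B b v W'" using inj by metis
      then show "{edg B b v W} \<inter> {edg B b v W'} = {}" by simp
    qed
    show "\<And>W. W \<in> Ws n B m \<Longrightarrow> {edg B b v W} \<subseteq> edge_cands n d"
      using edg_cand[OF B b v _ jm] by simp
  qed simp_all
  also have "\<dots> = (\<Prod>W\<in>Ws n B m. 1 - qq)"
  proof (intro prod.cong refl)
    fix W assume W: "W \<in> Ws n B m"
    have "measure_pmf.prob ?M {E. \<not> E (edg B b v W)} = 1 - measure_pmf.prob ?M {E. E (edg B b v W)}"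
      by (rule prob_neg)
    also have "\<dots> = 1 - qq"
      using prob_single_edge edg_cand[OF B b v W jm] card_edg[OF B b v W] by simp
    finally show "measure_pmf.prob ?M {E. \<not> E (edg B b v W)} = 1 - qq" .
  qed
  finally have *: "measure_pmf.prob ?M {E. \<forall>W\<in>Ws n B m. \<not> E (edg B b v W)} = (1 - qq) ^ card (Ws n B m)"
    by simp
  have "measure_pmf.prob ?M {E. \<not> (\<forall>W\<in>Ws n B m. \<not> E (edg B b v W))} = 1 - (1 - qq) ^ card (Ws n B m)"
    using * by (subst prob_neg) simp
  then show ?thesis by simp
qed

lemma prob_Yev:
  assumes v: "v \<in> Xs n B"
  shows "measure_pmf.prob (random_edges n d q) {E. Yev n B m v E}
         = (1 - (1 - qq) ^ card (Ws n B m)) ^ (j + 1)"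
proof -
  let ?M = "random_edges n d q"
  have "measure_pmf.prob ?M {E. Yev n B m v E}
      = (\<Prod>b\<in>B. measure_pmf.prob ?M {E. \<exists>W\<in>Ws n B m. E (edg B b v W)})"
    unfolding random_edges_def Yev_def
  proof (rule prob_Pi_pmf_blocks[where F="\<lambda>b. edg B b v ` Ws n B m" and P="\<lambda>b E. \<exists>W\<in>Ws n B m. E (edg B b v W)"])
    show "finite B" using B by (auto intro: finite_subset)
    have inj: "b = b'" if "b \<in> B" "b' \<in> B" "W \<in> Ws n B m" "W' \<in> Ws n B m"
      "edg B b v W = edg B b' v W'" for b b' W W'
      using edg_Int_B[OF B that(1) v that(3)] edg_Int_B[OF B that(2) v that(4)] that
      by (metis DiffD2 DiffI singletonD singletonI)
    show "disjoint_family_on (\<lambda>b. edg B b v ` Ws n B m) B"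
    proof (unfold disjoint_family_on_def, intro ballI impI)
      fix b b' assume bb: "b \<in> B" "b' \<in> B" "b \<noteq> b'"
      show "edg B b v ` Ws n B m \<inter> edg B b' v ` Ws n B m = {}"
      proof (rule equals0I)
        fix e assume "e \<in> edg B b v ` Ws n B m \<inter> edg B b' v ` Ws n B m"
        then obtain W W' where "W \<in> Ws n B m" "W' \<in> Ws n B m" "e = edg B b v W" "e = edg B b' v W'"
          by blast
        then show False using inj[OF bb(1,2)] bb(3) by metis
      qed
    qed
    show "\<And>b. b \<in> B \<Longrightarrow> edg B b v ` Ws n B m \<subseteq> edge_cands n d"
      using edg_cand[OF B _ v _ jm] by blast
    show "\<And>b f g. b \<in> B \<Longrightarrow> \<forall>x\<in>edg B b v ` Ws n B m. f x = g x \<Longrightarrow>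
          (\<exists>W\<in>Ws n B m. f (edg B b v W)) = (\<exists>W\<in>Ws n B m. g (edg B b v W))"
      by simp
  qed simp
  also have "\<dots> = (\<Prod>b\<in>B. 1 - (1 - qq) ^ card (Ws n B m))"
    using prob_Z v by simp
  finally show ?thesis using B by simp
qed

lemma map_Yev:
  "map_pmf (\<lambda>E v. v \<in> Xs n B \<and> Yev n B m v E) (random_edges n d q)
   = Pi_pmf (Xs n B) False (\<lambda>v. bernoulli_pmf ((1 - (1 - qq) ^ card (Ws n B m)) ^ (j + 1)))"
proof -
  have "map_pmf (\<lambda>E v. v \<in> Xs n B \<and> Yev n B m v E) (random_edges n d q)
   = Pi_pmf (Xs n B) False (\<lambda>v. bernoulli_pmf (measure_pmf.prob (random_edges n d q) {E. Yev n B m v E}))"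
    unfolding random_edges_def
  proof (rule map_Pi_pmf_local_bernoulli[where F="\<lambda>v. {edg B b v W |b W. b \<in> B \<and> W \<in> Ws n B m}" and Y="Yev n B m"])
    show "disjoint_family_on (\<lambda>v. {edg B b v W |b W. b \<in> B \<and> W \<in> Ws n B m}) (Xs n B)"
    proof -
      have inj: "v = v'" if "v \<in> Xs n B" "v' \<in> Xs n B" "b \<in> B" "W \<in> Ws n B m"
        "b' \<in> B" "W' \<in> Ws n B m" "edg B b v W = edg B b' v' W'" for v v' b b' W W'
        using edg_Int_Xs[OF B that(3) that(1) that(4)] edg_Int_Xs[OF B that(5) that(2) that(6)] that(7) by auto
      show ?thesis
      proof (unfold disjoint_family_on_def, intro ballI impI)
        fix v v' assume vv: "v \<in> Xs n B" "v' \<in> Xs n B" "v \<noteq> v'"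
        show "{edg B b v W |b W. b \<in> B \<and> W \<in> Ws n B m} \<inter> {edg B b v' W |b W. b \<in> B \<and> W \<in> Ws n B m} = {}"
        proof (rule equals0I)
          fix e assume "e \<in> {edg B b v W |b W. b \<in> B \<and> W \<in> Ws n B m} \<inter> {edg B b v' W |b W. b \<in> B \<and> W \<in> Ws n B m}"
          then obtain b W b' W' where "b \<in> B" "W \<in> Ws n B m" "b' \<in> B" "W' \<in> Ws n B m"
            "e = edg B b v W" "e = edg B b' v' W'" by blast
          then show False using inj[OF vv(1,2)] vv(3) by metis
        qed
      qed
    qed
  next
    fix i assume i: "i \<in> Xs n B"
    show "{edg B b i W |b W. b \<in> B \<and> W \<in> Ws n B m} \<subseteq> edge_cands n d"
      using edg_cand[OF B _ i _ jm] by blast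
  next
    fix i and f g :: "nat set \<Rightarrow> bool" assume "i \<in> Xs n B" "\<forall>x\<in>{edg B b i W |b W. b \<in> B \<and> W \<in> Ws n B m}. f x = g x"
    then show "Yev n B m i f = Yev n B m i g"
      unfolding Yev_def by blast
  qed simp_all
  also have "\<dots> = Pi_pmf (Xs n B) False (\<lambda>v. bernoulli_pmf ((1 - (1 - qq) ^ card (Ws n B m)) ^ (j + 1)))"
    by (intro Pi_pmf_cong refl) (simp add: prob_Yev)
  finally show ?thesis .
qed

end


lemma prob_bad_B:
  fixes n d j m :: nat and B :: "nat set" and q :: "nat \<Rightarrow> real" and qq c \<zeta> :: real
  assumes B: "B \<subseteq> {1..n}" "card B = j + 1" and jm: "1 \<le> j + m" "j + m \<le> d"
    and qq: "qq = min (q (j + m)) 1" "0 \<le> qq"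
    and c: "0 < c" "c \<le> (1 - (1 - qq) ^ card (Ws n B m)) ^ (j + 1)"
    and X: "Xs n B \<noteq> {}" and \<zeta>: "\<zeta> * real n \<le> c * real (card (Xs n B)) / 2"
  shows "measure_pmf.prob (random_edges n d q) {E. real (card {v\<in>Xs n B. Yev n B m v E}) < \<zeta> * real n}
         \<le> exp (- (c\<^sup>2 * real (card (Xs n B)) / 2))"
proof -
  define r where "r = (1 - (1 - qq) ^ card (Ws n B m)) ^ (j + 1)"
  define N where "N = card (Xs n B)"
  have N: "N > 0" using X unfolding N_def by (simp add: card_gt_0_iff)
  have qq1: "qq \<le> 1" using qq by simp
  have r01: "r \<in> {0..1}"
  proof -
    have "0 \<le> (1 - qq) ^ card (Ws n B m)" "(1 - qq) ^ card (Ws n B m) \<le> 1"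
      using qq qq1 by (auto intro: power_le_one)
    then have "0 \<le> 1 - (1 - qq) ^ card (Ws n B m)" "1 - (1 - qq) ^ card (Ws n B m) \<le> 1" by auto
    then show ?thesis unfolding r_def atLeastAtMost_iff by (intro conjI zero_le_power power_le_one)
  qed
  have "measure_pmf.prob (random_edges n d q) {E. real (card {v\<in>Xs n B. Yev n B m v E}) < \<zeta> * real n}
      = measure_pmf.prob (map_pmf (\<lambda>E v. v \<in> Xs n B \<and> Yev n B m v E) (random_edges n d q))
           {f. real (card {v\<in>Xs n B. f v}) < \<zeta> * real n}"
    by simp
  also have "\<dots> = measure_pmf.prob (Pi_pmf (Xs n B) False (\<lambda>v. bernoulli_pmf r))
           {f. real (card {v\<in>Xs n B. f v}) < \<zeta> * real n}"
    unfolding r_def by (subst map_Yev[of B n j m d qq q, OF B jm qq]) (rule refl)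
  also have "\<dots> \<le> measure_pmf.prob (Pi_pmf (Xs n B) False (\<lambda>v. bernoulli_pmf r))
           {f. real (card {v\<in>Xs n B. f v}) \<le> (\<Sum>v\<in>Xs n B. r) - c * N / 2}"
  proof (rule measure_pmf.finite_measure_mono)
    have "\<zeta> * real n \<le> r * N - c * N / 2"
    proof -
      have "c \<le> r" using c unfolding r_def by simp
      then have "c * N \<le> r * N" by (intro mult_right_mono) auto
      then show ?thesis using \<zeta> unfolding N_def by linarith
    qed
    then show "{f. real (card {v\<in>Xs n B. f v}) < \<zeta> * real n} \<subseteq>
       {f. real (card {v\<in>Xs n B. f v}) \<le> (\<Sum>v\<in>Xs n B. r) - c * N / 2}"
      unfolding N_def by (auto simp: mult.commute)
  qed simp
  also have "\<dots> \<le> exp (-2 * (c * N / 2)\<^sup>2 / real (card (Xs n B)))"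
    by (rule bernoulli_Pi_lower_tail) (use X r01 c in auto)
  also have "-2 * (c * N / 2)\<^sup>2 / real (card (Xs n B)) = - (c\<^sup>2 * real (card (Xs n B)) / 2)"
    using N unfolding N_def by (simp add: power2_eq_square field_simps)
  finally show ?thesis .
qed


lemma add_set_subset:
  assumes B: "B \<subseteq> {1..n}" and E: "\<And>e. E e \<Longrightarrow> e \<in> edge_cands n d" and T: "T \<in> add_set (complex_of n E) B"
  shows "T \<subseteq> {1..n}"
  using T B E unfolding add_set_def complex_of_def edge_cands_def by blast

lemma shells_from_Yev:
  assumes B: "B \<subseteq> {1..n}" "card B = j + 1" and E: "\<And>e. E e \<Longrightarrow> e \<in> edge_cands n d"
  shows "card {v\<in>Xs n B. Yev n B m v E} \<le> card {S. is_shell (add_set (complex_of n E) B) j S \<and> B \<subseteq> S}"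
proof -
  let ?G = "add_set (complex_of n E) B"
  have finB: "finite B" using B(1) finite_atLeastAtMost by (rule finite_subset)
  have sub: "S \<subseteq> {1..n}" if S: "is_shell ?G j S" for S
  proof
    fix x assume x: "x \<in> S"
    have cS: "card S = j + 2" "finite S" and allT: "\<And>T. T \<subseteq> S \<Longrightarrow> card T = j + 1 \<Longrightarrow> T \<in> ?G"
      using S unfolding is_shell_def by blast+
    have "card (S - {x}) = j + 1" using cS x by simp
    then have "card (S - {x}) > 0" by simp
    then have "S - {x} \<noteq> {}" by (simp add: card_gt_0_iff)
    then obtain y where y: "y \<in> S" "y \<noteq> x" by blast
    have "card (S - {y}) = j + 1" using cS y by simp
    then have "S - {y} \<in> ?G" by (intro allT) auto
    then have "S - {y} \<subseteq> {1..n}" using add_set_subset[OF B(1)] E by metis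
    then show "x \<in> {1..n}" using x y by blast
  qed
  have fin: "finite {S. is_shell ?G j S \<and> B \<subseteq> S}"
    by (rule finite_subset[of _ "Pow {1..n}"]) (use sub in blast, simp)
  have shell: "is_shell ?G j (insert v B)" if v: "v \<in> Xs n B" "Yev n B m v E" for v
  proof -
    have vB: "v \<notin> B" using v by (auto simp: Xs_def)
    have "card (insert v B) = j + 2" using vB finB B by simp
    moreover have "T \<in> ?G" if T: "T \<subseteq> insert v B" "card T = j + 1" for T
    proof (cases "v \<in> T")
      case False
      then have "T \<subseteq> B" using T by blast
      moreover have "T \<noteq> {}" using T by auto
      ultimately show ?thesis by (auto simp: add_set_def)
    next
      case True
      have TB: "T - {v} \<subseteq> B" using T by blast
      have finT: "finite T" using T finB by (auto intro: finite_subset)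
      have cT: "card (T - {v}) = j" using T True finT by simp
      have "card (B - (T - {v})) = 1" using card_Diff_subset[OF finite_subset[OF TB finB] TB] cT B finB by simp
      then obtain b where b: "B - (T - {v}) = {b}" by (auto simp: card_Suc_eq)
      then have bB: "b \<in> B" by blast
      have Tv: "T - {v} = B - {b}" using b TB by blast
      obtain W where W: "W \<in> Ws n B m" "E (edg B b v W)" using v(2) bB unfolding Yev_def by blast
      have "T \<subseteq> edg B b v W" using Tv True unfolding edg_def by blast
      moreover have "T \<noteq> {}" using True by auto
      ultimately have "T \<in> complex_of n E" using W unfolding complex_of_def by blast
      then show ?thesis by (simp add: add_set_def)
    qed
    ultimately show ?thesis using finB unfolding is_shell_def by simp
  qed
  have inj: "inj_on (\<lambda>v. insert v B) {v\<in>Xs n B. Yev n B m v E}"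
  proof (rule inj_onI)
    fix v v' assume "v \<in> {v\<in>Xs n B. Yev n B m v E}" "v' \<in> {v\<in>Xs n B. Yev n B m v E}" "insert v B = insert v' B"
    then show "v = v'" by (auto simp: Xs_def)
  qed
  have "card {v\<in>Xs n B. Yev n B m v E} = card ((\<lambda>v. insert v B) ` {v\<in>Xs n B. Yev n B m v E})"
    using inj by (simp add: card_image)
  also have "\<dots> \<le> card {S. is_shell ?G j S \<and> B \<subseteq> S}"
    by (rule card_mono[OF fin]) (use shell in auto)
  finally show ?thesis .
qed


lemma Ws_lower:
  assumes B: "B \<subseteq> {1..n}" "card B = j + 1" and n: "real n \<ge> 8 * (real j + 2)" "real n \<ge> 4 * real m" and m: "1 \<le> m"
  shows "(real n / (4 * real m)) ^ m \<le> real (card (Ws n B m))"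
proof -
  have finB: "finite B" using B(1) finite_atLeastAtMost by (rule finite_subset)
  have Y: "real (card (Ys n B)) \<ge> real n - real (n div 2) - real (j + 1)"
    by (rule card_Ys[OF B(2) finB])
  have "real (n div 2) \<le> real n / 2" by linarith
  then have Y4: "real (card (Ys n B)) \<ge> real n / 4" using Y n by simp
  then have Ym: "m \<le> card (Ys n B)" using n m by (simp add: field_simps)
  have "(real n / (4 * real m)) ^ m \<le> (real (card (Ys n B)) / real m) ^ m"
    using Y4 m by (intro power_mono divide_right_mono) (auto simp: field_simps)
  also have "\<dots> \<le> real (card (Ys n B) choose m)"
    by (rule binomial_ge_n_over_k_pow_k[OF Ym])
  finally show ?thesis by (simp add: card_Ws)
qed

lemma Xs_lower:
  assumes B: "B \<subseteq> {1..n}" "card B = j + 1" and n: "real n \<ge> 8 * (real j + 2)"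
  shows "real (card (Xs n B)) \<ge> real n / 4"
proof -
  have finB: "finite B" using B(1) finite_atLeastAtMost by (rule finite_subset)
  have X: "real (card (Xs n B)) \<ge> real (n div 2) - real (j + 1)"
    by (rule card_Xs[OF B(2) finB])
  have "n \<le> 2 * (n div 2) + 1" by simp
  then have "real n \<le> 2 * real (n div 2) + 1" by linarith
  then have "real (n div 2) \<ge> (real n - 1) / 2" by simp
  then show ?thesis using X n by simp
qed

lemma one_minus_pow_le:
  fixes qq :: real and M :: nat
  assumes "0 \<le> qq" "qq \<le> 1" "\<kappa> \<le> qq * M"
  shows "(1 - qq) ^ M \<le> exp (- \<kappa>)"
proof -
  have "(1 - qq) ^ M \<le> exp (- qq) ^ M"
    using assms exp_ge_add_one_self[of "- qq"] by (intro power_mono) auto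
  also have "\<dots> = exp (- qq * M)" by (simp add: exp_of_nat_mult[symmetric] mult.commute)
  also have "\<dots> \<le> exp (- \<kappa>)" using assms by simp
  finally show ?thesis .
qed

lemma main_n:
  fixes n d j m :: nat and q :: "nat \<Rightarrow> real" and \<kappa> c :: real
  assumes m: "1 \<le> m" "j + m \<le> d"
    and n: "real n \<ge> 8 * (real j + 2)" "real n \<ge> 4 * real m"
    and q: "0 \<le> q (j + m)" and \<kappa>: "\<kappa> > 0" "\<kappa> \<le> min (q (j + m)) 1 * (real n / (4 * real m)) ^ m"
    and c: "c = (1 - exp (- \<kappa>)) ^ (j + 1)"
  shows "measure_pmf.prob (random_complex n d q)
           {G. \<forall>B. B \<subseteq> {1..n} \<and> card B = j + 1 \<longrightarrow>
                  real (card {S. is_shell (add_set G B) j S \<and> B \<subseteq> S}) \<ge> c / 8 * real n}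
         \<ge> 1 - real n ^ (j + 1) * exp (- (c\<^sup>2 * real n / 8))"
proof -
  define qq where "qq = min (q (j + m)) 1"
  define RE where "RE = random_edges n d q"
  define Bs where "Bs = {B. B \<subseteq> {1..n} \<and> card B = j + 1}"
  define bad where "bad = (\<lambda>B. {E. real (card {v\<in>Xs n B. Yev n B m v E}) < c / 8 * real n})"
  define Supp where "Supp = {E. \<forall>e. E e \<longrightarrow> e \<in> edge_cands n d}"
  define Target where "Target = {G. \<forall>B. B \<subseteq> {1..n} \<and> card B = j + 1 \<longrightarrow>
                  real (card {S. is_shell (add_set G B) j S \<and> B \<subseteq> S}) \<ge> c / 8 * real n}"
  have qq: "0 \<le> qq" "qq \<le> 1" using q by (auto simp: qq_def)
  have c0: "0 < c" unfolding c using \<kappa> by simp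
  have finBs: "finite Bs" unfolding Bs_def by (rule finite_subset[of _ "Pow {1..n}"]) auto
  have cardBs: "real (card Bs) \<le> real n ^ (j + 1)"
  proof -
    have "card Bs = n choose (j + 1)" unfolding Bs_def using n_subsets[of "{1..n}" "j+1"] by simp
    also have "\<dots> \<le> n ^ (j + 1)"
    proof (cases "j + 1 \<le> n")
      case True
      then show ?thesis by (rule binomial_le_pow)
    next
      case False
      then show ?thesis by (simp add: binomial_eq_0)
    qed
    finally show ?thesis by (metis of_nat_le_iff of_nat_power)
  qed
  have badB: "measure_pmf.prob RE (bad B) \<le> exp (- (c\<^sup>2 * real n / 8))" if B: "B \<in> Bs" for B
  proof -
    have B': "B \<subseteq> {1..n}" "card B = j + 1" using B by (auto simp: Bs_def)
    have X4: "real (card (Xs n B)) \<ge> real n / 4" by (rule Xs_lower[OF B' n(1)])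
    have Xne: "Xs n B \<noteq> {}" using X4 n by auto
    have W: "(real n / (4 * real m)) ^ m \<le> real (card (Ws n B m))" by (rule Ws_lower[OF B' n m(1)])
    have "\<kappa> \<le> qq * real (card (Ws n B m))"
      using \<kappa>(2) W qq unfolding qq_def[symmetric] by (meson mult_left_mono order_trans)
    then have "(1 - qq) ^ card (Ws n B m) \<le> exp (- \<kappa>)" by (rule one_minus_pow_le[OF qq])
    then have cr: "c \<le> (1 - (1 - qq) ^ card (Ws n B m)) ^ (j + 1)"
      unfolding c using \<kappa> by (intro power_mono) auto
    have "measure_pmf.prob RE (bad B) \<le> exp (- (c\<^sup>2 * real (card (Xs n B)) / 2))"
      unfolding RE_def bad_def
    proof (rule prob_bad_B[of B n j m d qq q c])
      show "c / 8 * real n \<le> c * real (card (Xs n B)) / 2" using X4 c0 by simp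
    qed (use B' m qq_def qq c0 cr Xne in auto)
    also have "\<dots> \<le> exp (- (c\<^sup>2 * real n / 8))"
    proof -
      have "c\<^sup>2 * (real n / 4) \<le> c\<^sup>2 * real (card (Xs n B))" using X4 by (intro mult_left_mono) auto
      then show ?thesis by (simp add: mult.commute)
    qed
    finally show ?thesis .
  qed
  have SuppRE: "set_pmf RE \<subseteq> Supp"
    unfolding RE_def random_edges_def Supp_def using set_Pi_pmf_subset[of "edge_cands n d" False] by auto
  have sub: "Supp \<inter> (UNIV - (\<Union>B\<in>Bs. bad B)) \<subseteq> complex_of n -` Target"
  proof
    fix E assume E: "E \<in> Supp \<inter> (UNIV - (\<Union>B\<in>Bs. bad B))"
    show "E \<in> complex_of n -` Target"
    proof (unfold Target_def vimage_def mem_Collect_eq, intro allI impI, elim conjE)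
      fix B assume B: "B \<subseteq> {1..n}" "card B = j + 1"
      then have "B \<in> Bs" by (simp add: Bs_def)
      then have "c / 8 * real n \<le> real (card {v\<in>Xs n B. Yev n B m v E})" using E by (auto simp: bad_def)
      also have "\<dots> \<le> real (card {S. is_shell (add_set (complex_of n E) B) j S \<and> B \<subseteq> S})"
        using shells_from_Yev[OF B, of E d m] E by (auto simp: Supp_def)
      finally show "c / 8 * real n \<le> real (card {S. is_shell (add_set (complex_of n E) B) j S \<and> B \<subseteq> S})" .
    qed
  qed
  have "measure_pmf.prob RE (UNIV - (Supp \<inter> (UNIV - (\<Union>B\<in>Bs. bad B))))
        \<le> measure_pmf.prob RE (UNIV - Supp) + measure_pmf.prob RE (\<Union>B\<in>Bs. bad B)"
  proof (rule order_trans[OF measure_pmf.finite_measure_mono measure_subadditive])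
    show "UNIV - (Supp \<inter> (UNIV - (\<Union>B\<in>Bs. bad B))) \<subseteq> (UNIV - Supp) \<union> (\<Union>B\<in>Bs. bad B)" by blast
  qed (auto simp: measure_pmf.emeasure_eq_measure)
  also have "measure_pmf.prob RE (UNIV - Supp) = 0"
    using SuppRE by (subst measure_pmf_zero_iff) auto
  also have "measure_pmf.prob RE (\<Union>B\<in>Bs. bad B) \<le> (\<Sum>B\<in>Bs. measure_pmf.prob RE (bad B))"
    by (rule measure_pmf.finite_measure_subadditive_finite[OF finBs]) auto
  also have "\<dots> \<le> (\<Sum>B\<in>Bs. exp (- (c\<^sup>2 * real n / 8)))"
    by (rule sum_mono) (rule badB)
  also have "\<dots> = real (card Bs) * exp (- (c\<^sup>2 * real n / 8))" by simp
  also have "\<dots> \<le> real n ^ (j + 1) * exp (- (c\<^sup>2 * real n / 8))"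
    by (rule mult_right_mono[OF cardBs]) simp
  finally have compl: "measure_pmf.prob RE (UNIV - (Supp \<inter> (UNIV - (\<Union>B\<in>Bs. bad B))))
      \<le> real n ^ (j + 1) * exp (- (c\<^sup>2 * real n / 8))" by simp
  have "measure_pmf.prob RE (UNIV - (Supp \<inter> (UNIV - (\<Union>B\<in>Bs. bad B))))
      = 1 - measure_pmf.prob RE (Supp \<inter> (UNIV - (\<Union>B\<in>Bs. bad B)))"
    using measure_pmf.prob_compl[of "Supp \<inter> (UNIV - (\<Union>B\<in>Bs. bad B))" RE] by simp
  with compl have "1 - real n ^ (j + 1) * exp (- (c\<^sup>2 * real n / 8))
      \<le> measure_pmf.prob RE (Supp \<inter> (UNIV - (\<Union>B\<in>Bs. bad B)))" by linarith
  also have "\<dots> \<le> measure_pmf.prob RE (complex_of n -` Target)"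
    by (rule measure_pmf.finite_measure_mono[OF sub]) simp
  also have "\<dots> = measure_pmf.prob (random_complex n d q) Target"
    by (simp add: random_complex_def RE_def)
  finally show ?thesis unfolding Target_def .
qed


lemma poly_exp_tendsto_0:
  fixes s :: real and k :: nat
  assumes s: "s > 0"
  shows "(\<lambda>n::nat. real n ^ k * exp (- (s * real n))) \<longlonglongrightarrow> 0"
proof -
  have lim: "filterlim (\<lambda>n::nat. s * real n) at_top sequentially"
    using s by (intro filterlim_tendsto_pos_mult_at_top[OF tendsto_const s filterlim_real_sequentially])
  have "(\<lambda>n::nat. (s * real n) ^ k / exp (s * real n)) \<longlonglongrightarrow> 0"
    by (rule filterlim_compose[OF tendsto_power_div_exp_0 lim])
  then have "(\<lambda>n::nat. (1 / s) ^ k * ((s * real n) ^ k / exp (s * real n))) \<longlonglongrightarrow> (1 / s) ^ k * 0"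
    by (intro tendsto_mult tendsto_const)
  moreover have "(1 / s) ^ k * ((s * real n) ^ k / exp (s * real n)) = real n ^ k * exp (- (s * real n))" for n
    using s by (simp add: power_mult_distrib exp_minus field_simps)
  ultimately show ?thesis by simp
qed

theorem lemma5p3:
  fixes d j :: nat and p :: "nat \<Rightarrow> nat \<Rightarrow> real"
  assumes "d \<ge> 2" and "1 \<le> j" and "j \<le> d - 1" and "j_critical d j p"
  shows "\<forall>\<epsilon>>0. \<exists>\<zeta>>0. \<forall>\<tau> :: nat \<Rightarrow> real. (\<forall>n. \<tau> n \<ge> \<epsilon> / ln (real n)) \<longrightarrow>
           (\<lambda>n. measure_pmf.prob (random_complex n d (\<lambda>k. \<tau> n * p k n))
              {G. \<forall>B. B \<subseteq> {1..n} \<and> card B = j + 1 \<longrightarrow>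
                     real (card {S. is_shell (add_set G B) j S \<and> B \<subseteq> S}) \<ge> \<zeta> * real n})
           \<longlonglongrightarrow> 1"
proof (intro allI impI)
  fix \<epsilon> :: real assume \<epsilon>: "\<epsilon> > 0"
  from assms(4) obtain \<alpha> \<beta> \<gamma> where adm: "admissible_repr d j p \<alpha> \<beta> \<gamma>"
    unfolding j_critical_def by blast
  from adm obtain k0 where k0: "k0 \<in> {j+1..d}" "\<alpha> k0 > 0"
    unfolding admissible_repr_def by blast
  have k0': "k0 \<in> {1..d}" using k0 by auto
  have rep: "\<And>n. p k0 n = (\<alpha> k0 * ln (real n) + \<beta> k0 n) / (real n powr (real k0 - real j + \<gamma> k0)) * fact (k0 - j)"
    and \<gamma>0: "\<gamma> k0 = 0 \<longrightarrow> (\<lambda>n. \<bar>\<beta> k0 n\<bar>) \<in> o(\<lambda>n. ln (real n))"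
    and \<gamma>or: "\<alpha> k0 = 0 \<or> \<gamma> k0 = 0"
    using adm k0' unfolding admissible_repr_def by blast+
  have \<gamma>: "\<gamma> k0 = 0" using \<gamma>or k0 by auto
  with \<gamma>0 have small: "(\<lambda>n. \<bar>\<beta> k0 n\<bar>) \<in> o(\<lambda>n. ln (real n))" by simp
  define m where "m = k0 - j"
  define a where "a = \<alpha> k0"
  have a: "a > 0" using k0 by (simp add: a_def)
  have m: "1 \<le> m" "j + m \<le> d" "j + m = k0" using k0 by (auto simp: m_def)
  have rep': "p k0 n = (a * ln (real n) + \<beta> k0 n) / (real n powr real m) * fact m" for n
    using rep[of n] \<gamma> m by (simp add: a_def m_def of_nat_diff)
  define \<kappa> where "\<kappa> = \<epsilon> * a * fact m / (2 * (4 * real m) ^ m)"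
  have \<kappa>: "\<kappa> > 0" using \<epsilon> a m by (simp add: \<kappa>_def)
  define c where "c = (1 - exp (- \<kappa>)) ^ (j + 1)"
  have c: "c > 0" using \<kappa> by (simp add: c_def)
  show "\<exists>\<zeta>>0. \<forall>\<tau> :: nat \<Rightarrow> real. (\<forall>n. \<tau> n \<ge> \<epsilon> / ln (real n)) \<longrightarrow>
           (\<lambda>n. measure_pmf.prob (random_complex n d (\<lambda>k. \<tau> n * p k n))
              {G. \<forall>B. B \<subseteq> {1..n} \<and> card B = j + 1 \<longrightarrow>
                     real (card {S. is_shell (add_set G B) j S \<and> B \<subseteq> S}) \<ge> \<zeta> * real n})
           \<longlonglongrightarrow> 1"
  proof (intro exI[of _ "c / 8"] conjI allI impI)
    show "c / 8 > 0" using c by simp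
    fix \<tau> :: "nat \<Rightarrow> real" assume \<tau>: "\<forall>n. \<tau> n \<ge> \<epsilon> / ln (real n)"
    define P where "P = (\<lambda>n. measure_pmf.prob (random_complex n d (\<lambda>k. \<tau> n * p k n))
              {G. \<forall>B. B \<subseteq> {1..n} \<and> card B = j + 1 \<longrightarrow>
                     real (card {S. is_shell (add_set G B) j S \<and> B \<subseteq> S}) \<ge> c / 8 * real n})"
    have ev1: "eventually (\<lambda>n. \<bar>\<beta> k0 n\<bar> \<le> a / 2 * \<bar>ln (real n)\<bar>) sequentially"
      using landau_o.smallD[OF small, of "a / 2"] a by simp
    have ev2: "eventually (\<lambda>n. real n \<ge> max (max 2 (8 * (real j + 2))) (max (4 * real m) (\<kappa> * (4 * real m) ^ m))) sequentially"
      using filterlim_real_sequentially unfolding filterlim_at_top by blast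
    have low: "eventually (\<lambda>n. 1 - real n ^ (j + 1) * exp (- (c\<^sup>2 / 8 * real n)) \<le> P n) sequentially"
      using ev1 ev2
    proof eventually_elim
      case (elim n)
      have n2: "real n \<ge> 2" and n8: "real n \<ge> 8 * (real j + 2)" and n4: "real n \<ge> 4 * real m"
        and n\<kappa>: "real n \<ge> \<kappa> * (4 * real m) ^ m" using elim(2) by auto
      define L where "L = ln (real n)"
      have L: "L > 0" using n2 by (simp add: L_def)
      have \<beta>: "\<beta> k0 n \<ge> - (a / 2 * L)" using elim(1) L by (simp add: L_def abs_le_iff)
      have npos: "real n > 0" using n2 by simp
      have pw: "real n powr real m = real n ^ m" using npos by (simp add: powr_realpow)
      have nm: "real n ^ m > 0" using npos by simp
      define q0 where "q0 = \<epsilon> * a * fact m / (2 * real n ^ m)"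
      have P0: "p k0 n \<ge> (a / 2 * L) * fact m / real n ^ m"
      proof -
        have h1: "a * L + \<beta> k0 n \<ge> a / 2 * L" using \<beta> by linarith
        have h2: "a / 2 * L \<ge> 0" using a L by simp
        have "(a / 2 * L) / real n ^ m * fact m \<le> (a * L + \<beta> k0 n) / real n ^ m * fact m"
          using nm h1 h2 by (intro mult_right_mono divide_right_mono) (auto simp del: of_nat_fact)
        then show ?thesis using rep'[of n] pw by (simp add: L_def)
      qed
      have Pnn: "(a / 2 * L) * fact m / real n ^ m \<ge> 0" using a L nm by simp
      have \<tau>n: "\<tau> n \<ge> \<epsilon> / L" using \<tau> by (simp add: L_def)
      have "q0 = (\<epsilon> / L) * ((a / 2 * L) * fact m / real n ^ m)"
        using L by (simp add: q0_def field_simps)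
      also have "\<dots> \<le> \<tau> n * p k0 n"
      proof -
        have "0 \<le> \<epsilon> / L" using \<epsilon> L by simp
        then have "0 \<le> \<tau> n" using \<tau>n by linarith
        then show ?thesis using \<tau>n P0 Pnn \<epsilon> L by (intro mult_mono) auto
      qed
      finally have q0le: "q0 \<le> \<tau> n * p k0 n" .
      have q0nn: "q0 \<ge> 0" using \<epsilon> a nm by (simp add: q0_def)
      have "real n ^ m \<ge> real n"
        using m(1) n2 by (metis one_le_power power_increasing power_one_right numeral_le_real_of_nat_iff one_le_numeral order_trans)
      then have "\<kappa> * (4 * real m) ^ m \<le> real n ^ m" using n\<kappa> by linarith
      then have q01: "q0 \<le> 1"
        using nm m(1) unfolding q0_def \<kappa>_def by (simp add: field_simps)
      have "\<kappa> = q0 * (real n / (4 * real m)) ^ m"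
        using nm m(1) unfolding q0_def \<kappa>_def by (simp add: power_divide field_simps)
      also have "\<dots> \<le> min (\<tau> n * p k0 n) 1 * (real n / (4 * real m)) ^ m"
        using q0le q01 npos m(1) by (intro mult_right_mono) auto
      finally have \<kappa>le: "\<kappa> \<le> min ((\<lambda>k. \<tau> n * p k n) (j + m)) 1 * (real n / (4 * real m)) ^ m"
        using m(3) by simp
      have qnn: "0 \<le> (\<lambda>k. \<tau> n * p k n) (j + m)" using q0le q0nn m(3) by simp
      have "1 - real n ^ (j + 1) * exp (- (c\<^sup>2 * real n / 8)) \<le> P n"
        unfolding P_def by (rule main_n[of m j d n "\<lambda>k. \<tau> n * p k n" \<kappa> c, OF m(1,2) n8 n4 qnn \<kappa> \<kappa>le c_def])
      then show ?case by simp
    qed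
    have up: "eventually (\<lambda>n. P n \<le> 1) sequentially"
      unfolding P_def by simp
    have "(\<lambda>n. 1 - real n ^ (j + 1) * exp (- (c\<^sup>2 / 8 * real n))) \<longlonglongrightarrow> 1 - 0"
      using c by (intro tendsto_diff tendsto_const poly_exp_tendsto_0) simp
    then have "P \<longlonglongrightarrow> 1"
      by (intro tendsto_sandwich[OF low up]) auto
    then show "(\<lambda>n. measure_pmf.prob (random_complex n d (\<lambda>k. \<tau> n * p k n))
              {G. \<forall>B. B \<subseteq> {1..n} \<and> card B = j + 1 \<longrightarrow>
                     real (card {S. is_shell (add_set G B) j S \<and> B \<subseteq> S}) \<ge> c / 8 * real n})
           \<longlonglongrightarrow> 1" unfolding P_def .
  qed
qed

end
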